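(* Let $n$ and $0<n_1<\cdots<n_d<n$ be integers with $m_1=n_1$, $m_k=n_k-n_{k-1}$ ($2\le k\le d$), $m_{d+1}=n-n_d$, and regard $\mathrm{Flag}(n_1,\dots,n_d;n)=\{(VJ_1V^{\mathsf T},\dots,VJ_dV^{\mathsf T}):V\in\mathrm{O}(n)\}$ as a submanifold of $(\mathbb{R}^{n\times n})^d$ with the Frobenius inner product. Let $V(t)$ be a differentiable curve in $\mathrm{O}(n)$ with $\Lambda(t)=V(t)^{\mathsf T}\dot V(t)$ satisfying $\Lambda(k,k)\equiv0$ ($k=1,\dots,d+1$), $c(t)=V(t)(J_1,\dots,J_d)V(t)^{\mathsf T}$, and let $X(t)\in\mathfrak{so}(n)$ be differentiable with $X(k,k)\equiv0$. Let \[ T_3(t)=V(t)\big(\Lambda J_1X+XJ_1\Lambda,\dots,\Lambda J_dX+XJ_d\Lambda\big)V(t)^{\mathsf T}. \] Then the orthogonal projection of $T_3(t)$ onto $\mathbb{T}_{c(t)}\mathrm{Flag}(n_1,\dots,n_d;n)$ equals $V(t)(Z_1(t),\dots,Z_d(t))V(t)^{\mathsf T}$, where $Z_1,\dots,Z_d$ are symmetric with blocks \[ Z_k(p,q)=\begin{cases}-\sum_{1\le l\le d,\ l\ne k}\big(X(k,l)\Lambda(l,d+1)+\Lambda(l,k)^{\mathsf T}X(d+1,l)^{\mathsf T}\big), & p=k,\ q=d+1,\\[2pt] -\sum_{1\le l\le d,\ l\ne k}\big(X(d+1,l)\Lambda(l,k)+\Lambda(l,d+1)^{\mathsf T}X(k,l)^{\mathsf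 T}\big), & p=d+1,\ q=k,\\[2pt] 0, & \text{otherwise}.\end{cases} \]
   Context: $J_k=\operatorname{diag}(-I_{m_1},\dots,-I_{m_{k-1}},I_{m_k},-I_{m_{k+1}},\dots,-I_{m_{d+1}})$. $V(X_1,\dots,X_d)V^{\mathsf T}$ denotes $(VX_1V^{\mathsf T},\dots,VX_dV^{\mathsf T})$. For an $n\times n$ matrix $M$, $M(p,q)$ denotes its $(p,q)$ block in the partition $n=m_1+\cdots+m_{d+1}$. *)

theory Defs
  imports "HOL-Analysis.Analysis"
begin

text \<open>Matrices are n x n real matrices of type real^'n^'n with n = CARD('n).
  The coordinates are ordered by a bijection ix : 'n -> {0..<n}. The partition
  n = m_1 + ... + m_(d+1) is given by thresholds ns 1 < ... < ns d; a d-tuple of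
  matrices is a function nat => matrix, indexed by 1..d and zero elsewhere.\<close>

definition upper :: "nat \<Rightarrow> nat \<Rightarrow> (nat \<Rightarrow> nat) \<Rightarrow> nat \<Rightarrow> nat" where
  "upper n d ns k = (if k \<le> d then ns k else n)"

text \<open>Block index (in 1..d+1) of a coordinate i: the k with n_(k-1) <= ix i < n_k.\<close>
definition blk :: "nat \<Rightarrow> (nat \<Rightarrow> nat) \<Rightarrow> ('n::finite \<Rightarrow> nat) \<Rightarrow> 'n \<Rightarrow> nat" where
  "blk d ns ix i = (LEAST k. 1 \<le> k \<and> ix i < upper CARD('n) d ns k)"

definition Jmat :: "nat \<Rightarrow> (nat \<Rightarrow> nat) \<Rightarrow> ('n::finite \<Rightarrow> nat) \<Rightarrow> nat \<Rightarrow> real^'n^'n" where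
  "Jmat d ns ix k = (\<chi> i j. if i = j then (if blk d ns ix i = k then 1 else -1) else 0)"

definition blockM :: "nat \<Rightarrow> (nat \<Rightarrow> nat) \<Rightarrow> ('n::finite \<Rightarrow> nat) \<Rightarrow> real^'n^'n \<Rightarrow> nat \<Rightarrow> nat \<Rightarrow> real^'n^'n" where
  "blockM d ns ix M p q = (\<chi> i j. if blk d ns ix i = p \<and> blk d ns ix j = q then M $ i $ j else 0)"

definition conj_tuple :: "nat \<Rightarrow> real^'n^'n \<Rightarrow> (nat \<Rightarrow> real^'n^'n) \<Rightarrow> nat \<Rightarrow> real^'n^'n" where
  "conj_tuple d V Xs = (\<lambda>k. if k \<in> {1..d} then V ** Xs k ** transpose V else 0)"

definition flag :: "nat \<Rightarrow> (nat \<Rightarrow> nat) \<Rightarrow> ('n::finite \<Rightarrow> nat) \<Rightarrow> (nat \<Rightarrow> real^'n^'n) set" where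
  "flag d ns ix = {conj_tuple d V (Jmat d ns ix) | V. orthogonal_matrix V}"

definition tangent_space :: "(nat \<Rightarrow> real^'n^'n) set \<Rightarrow> (nat \<Rightarrow> real^'n^'n) \<Rightarrow> (nat \<Rightarrow> real^'n^'n) set" where
  "tangent_space S c = {D. \<exists>\<gamma>. (\<forall>t. \<gamma> t \<in> S) \<and> \<gamma> 0 = c \<and>
       (\<forall>k. ((\<lambda>t. \<gamma> t k) has_vector_derivative D k) (at 0))}"

text \<open>Frobenius inner product on d-tuples (inner on real^'n^'n is the Frobenius product).\<close>
definition tup_inner :: "nat \<Rightarrow> (nat \<Rightarrow> real^'n^'n) \<Rightarrow> (nat \<Rightarrow> real^'n^'n) \<Rightarrow> real" where
  "tup_inner d A B = (\<Sum>k=1..d. inner (A k) (B k))"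

definition orth_proj :: "nat \<Rightarrow> (nat \<Rightarrow> real^'n^'n) set \<Rightarrow> (nat \<Rightarrow> real^'n^'n) \<Rightarrow> (nat \<Rightarrow> real^'n^'n)" where
  "orth_proj d S y = (THE p. p \<in> S \<and> (\<forall>u\<in>S. tup_inner d (y - p) u = 0))"

definition Zmat :: "nat \<Rightarrow> (nat \<Rightarrow> nat) \<Rightarrow> ('n::finite \<Rightarrow> nat) \<Rightarrow> real^'n^'n \<Rightarrow> real^'n^'n \<Rightarrow> nat \<Rightarrow> real^'n^'n" where
  "Zmat d ns ix Lam X k = (let B = blockM d ns ix in
     (\<chi> i j.
       if blk d ns ix i = k \<and> blk d ns ix j = d + 1 then
         (- (\<Sum>l\<in>{1..d} - {k}. B X k l ** B Lam l (d+1)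
                 + transpose (B Lam l k) ** transpose (B X (d+1) l))) $ i $ j
       else if blk d ns ix i = d + 1 \<and> blk d ns ix j = k then
         (- (\<Sum>l\<in>{1..d} - {k}. B X (d+1) l ** B Lam l k
                 + transpose (B Lam l (d+1)) ** transpose (B X k l))) $ i $ j
       else 0))"

end

theory Submission
  imports Defs "HOL-Analysis.Analysis"
begin


lemma blk_range:
  assumes ix: "bij_betw ix UNIV {..<CARD('n)}"
  shows "1 \<le> blk d ns (ix::'n::finite \<Rightarrow> nat) i \<and> blk d ns ix i \<le> d+1"
proof -
  have P: "1 \<le> d+1 \<and> ix i < upper CARD('n) d ns (d+1)"
    using ix by (auto simp: upper_def bij_betw_def)
  show ?thesis unfolding blk_def
    using LeastI[of "\<lambda>k. 1 \<le> k \<and> ix i < upper CARD('n) d ns k", OF P] Least_le[of "\<lambda>k. 1 \<le> k \<and> ix i < upper CARD('n) d ns k" "d+1", OF P]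
    by auto
qed
lemma J_right: "((A::real^'n^'n) ** Jmat d ns ix k) $ i $ j = A$i$j * (if blk d ns ix j = k then 1 else -1)"
proof -
  have "(A ** Jmat d ns ix k) $ i $ j = (\<Sum>r\<in>UNIV. if r = j then A$i$r * (if blk d ns ix r = k then 1 else -1) else 0)"
    unfolding matrix_matrix_mult_def Jmat_def vec_lambda_beta by (rule sum.cong) auto
  then show ?thesis by simp
qed

lemma J_left: "(Jmat d ns ix k ** (A::real^'n^'n)) $ i $ j = (if blk d ns ix i = k then 1 else -1) * A$i$j"
proof -
  have "(Jmat d ns ix k ** A) $ i $ j = (\<Sum>r\<in>UNIV. if i = r then (if blk d ns ix r = k then 1 else -1) * A$r$j else 0)"
    unfolding matrix_matrix_mult_def Jmat_def vec_lambda_beta by (rule sum.cong) auto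
  then show ?thesis by simp
qed

lemma mm_rdistrib: "((A::real^'n^'n) + B) ** C = A ** C + B ** C"
  by (simp add: matrix_matrix_mult_def vec_eq_iff sum.distrib algebra_simps)

lemma mm_rdiff: "((A::real^'n^'n) - B) ** C = A ** C - B ** C"
  by (simp add: matrix_matrix_mult_def vec_eq_iff sum_subtractf algebra_simps)

lemma mm_ldiff: "(C::real^'n^'n) ** (A - B) = C ** A - C ** B"
  by (simp add: matrix_matrix_mult_def vec_eq_iff sum_subtractf algebra_simps)

lemma tr_add: "transpose ((A::real^'n^'n) + B) = transpose A + transpose B"
  by (simp add: transpose_def vec_eq_iff)

lemma tr_diff: "transpose ((A::real^'n^'n) - B) = transpose A - transpose B"
  by (simp add: transpose_def vec_eq_iff)

lemma tr_neg: "transpose (- (A::real^'n^'n)) = - transpose A"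
  by (simp add: transpose_def vec_eq_iff)

lemma bb_mm: "bounded_bilinear ((**) :: real^'n^'n \<Rightarrow> real^'n^'n \<Rightarrow> real^'n^'n)"
proof -
  have "bilinear ((**) :: real^'n^'n \<Rightarrow> real^'n^'n \<Rightarrow> real^'n^'n)"
    unfolding bilinear_def
    by (auto intro!: linearI simp: matrix_add_ldistrib mm_rdistrib matrix_scalar_ac scalar_matrix_assoc)
  then show ?thesis using bilinear_conv_bounded_bilinear by blast
qed

lemma bl_tr: "bounded_linear (transpose :: real^'n^'n \<Rightarrow> real^'n^'n)"
proof -
  have "linear (transpose :: real^'n^'n \<Rightarrow> real^'n^'n)"
    by (auto intro!: linearI simp: transpose_def vec_eq_iff)
  then show ?thesis using linear_conv_bounded_linear by blast
qed

lemma J_tr: "transpose (Jmat d ns ix k) = Jmat d ns ix k"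
  by (simp add: transpose_def Jmat_def vec_eq_iff)

lemma J_sq: "Jmat d ns ix k ** Jmat d ns ix k = mat 1"
  by (simp add: vec_eq_iff J_right) (simp add: Jmat_def mat_def)

lemma J_orth: "k \<noteq> q \<Longrightarrow> (Jmat d ns ix k + mat 1) ** (Jmat d ns ix q + mat 1) = 0"
  by (simp add: vec_eq_iff matrix_add_ldistrib mm_rdistrib J_right) (simp add: Jmat_def mat_def)

lemma inner_trace: "inner (X::real^'n^'n) Y = trace (transpose X ** Y)"
  unfolding inner_vec_def trace_def matrix_matrix_mult_def transpose_def
  by (simp add: inner_vec_def) (rule sum.swap)

lemma inner_conj: "inner ((V::real^'n^'n) ** B ** transpose V) D = inner B (transpose V ** D ** V)"
proof -
  have "inner (V ** B ** transpose V) D = trace (V ** transpose B ** transpose V ** D)"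
    by (simp add: inner_trace matrix_transpose_mul matrix_mul_assoc)
  also have "\<dots> = trace (V ** (transpose B ** transpose V ** D))" by (simp add: matrix_mul_assoc)
  also have "\<dots> = trace ((transpose B ** transpose V ** D) ** V)" by (rule trace_mul_sym)
  also have "\<dots> = inner B (transpose V ** D ** V)" by (simp add: inner_trace matrix_mul_assoc)
  finally show ?thesis .
qed

lemma skew_deriv:
  assumes orth: "\<forall>s. orthogonal_matrix ((V::real\<Rightarrow>real^'n^'n) s)"
    and der: "(V has_vector_derivative V') (at t)"
  shows "transpose (transpose (V t) ** V') = - (transpose (V t) ** V')"
proof -
  have d1: "((\<lambda>s. transpose (V s) ** V s) has_vector_derivative (transpose (V t) ** V' + transpose V' ** V t)) (at t)"
    using bounded_bilinear.has_vector_derivative[OF bb_mm bounded_linear.has_vector_derivative[OF bl_tr der] der] .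
  have "(\<lambda>s. transpose (V s) ** V s) = (\<lambda>s. mat 1)" using orth by (simp add: orthogonal_matrix_def)
  with d1 have "((\<lambda>s. mat 1 :: real^'n^'n) has_vector_derivative (transpose (V t) ** V' + transpose V' ** V t)) (at t)" by simp
  then have "transpose (V t) ** V' + transpose V' ** V t = 0"
    using vector_derivative_unique_at has_vector_derivative_const by blast
  then show ?thesis by (simp add: matrix_transpose_mul eq_neg_iff_add_eq_0 add.commute)
qed



lemma skew_inner0:
  assumes sk: "transpose (Om::real^'n^'n) = - Om"
  shows "inner v (Om *v v) = 0"
proof -
  have "inner v (Om *v v) = inner (v v* Om) v" using dot_lmul_matrix[of v Om v] by simp
  also have "v v* Om = - (Om *v v)"
  proof -
    have "v v* Om = transpose Om *v v" by simp
    also have "\<dots> = - (Om *v v)" using sk by (simp add: matrix_vector_mult_def vec_eq_iff sum_negf)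
    finally show ?thesis .
  qed
  finally show ?thesis by (simp add: inner_commute)
qed

lemma mm_sR: "(A::real^'n^'n) ** (k *\<^sub>R B) = k *\<^sub>R (A ** B)"
  by (simp add: matrix_scalar_ac scalar_matrix_assoc)

lemma mm_sL: "(k *\<^sub>R (A::real^'n^'n)) ** B = k *\<^sub>R (A ** B)"
  by (simp add: scalar_matrix_assoc)

lemma aux_div: "(a::real) > 0 \<Longrightarrow> a * a / 2 * n / a = a / 2 * n"
  by (simp add: field_simps)
lemma aux_nn: "(n::real) \<ge> 0 \<Longrightarrow> y \<noteq> 0 \<Longrightarrow> norm (\<bar>y\<bar> * \<bar>y\<bar> / 2 * n / norm (y - 0)) = \<bar>y\<bar> / 2 * n"
proof -
  assume "n \<ge> 0" "y \<noteq> 0"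
  have "norm (\<bar>y\<bar> * \<bar>y\<bar> / 2 * n / norm (y - 0)) = \<bar>y\<bar> * \<bar>y\<bar> / 2 * n / \<bar>y\<bar>"
    using \<open>n \<ge> 0\<close> by (simp only: real_norm_def diff_zero abs_divide abs_mult abs_abs)
  also have "\<dots> = \<bar>y\<bar> / 2 * n" by (rule aux_div) (use \<open>y \<noteq> 0\<close> in simp)
  finally show ?thesis .
qed

lemma cayley:
  fixes Om :: "real^'n^'n"
  assumes sk: "transpose Om = - Om"
  shows "\<exists>C. (\<forall>s. orthogonal_matrix (C s)) \<and> C 0 = mat 1 \<and> (C has_vector_derivative Om) (at 0)"
proof -
  define A where "A s = mat 1 - (s/2) *\<^sub>R Om" for s
  define P where "P s = mat 1 + (s/2) *\<^sub>R Om" for s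
  have normA: "inner v v \<le> inner (A s *v v) (A s *v v)" for s v
  proof -
    have "A s *v v = v - (s/2) *\<^sub>R (Om *v v)"
      by (simp add: A_def algebra_simps scaleR_matrix_vector_assoc)
    then have "inner (A s *v v) (A s *v v) = inner v v + (s/2)^2 * inner (Om *v v) (Om *v v)"
      using skew_inner0[OF sk, of v]
      by (simp add: inner_diff_left inner_diff_right inner_commute power2_eq_square)
    then show ?thesis by simp
  qed
  have ex_inv: "\<exists>B. A s ** B = mat 1 \<and> B ** A s = mat 1" for s
  proof -
    have "\<forall>x. A s *v x = 0 \<longrightarrow> x = 0"
      using normA[of _ s] by (metis inner_zero_left inner_eq_zero_iff order_antisym inner_ge_zero)
    then obtain B where "B ** A s = mat 1" using matrix_left_invertible_ker by blast
    then show ?thesis using matrix_left_right_inverse by blast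
  qed
  define N where "N s = matrix_inv (A s)" for s
  have inv: "A s ** N s = mat 1 \<and> N s ** A s = mat 1" for s
    unfolding N_def matrix_inv_def using someI_ex[OF ex_inv[of s]] by blast
  have entry: "\<bar>N s $ i $ j\<bar> \<le> 1" for s i j
  proof -
    define w :: "real^'n" where "w = axis j 1"
    define v where "v = N s *v w"
    have "A s *v v = w" using inv[of s] by (simp add: v_def matrix_vector_mul_assoc)
    then have "inner v v \<le> 1" using normA[of v s] by (simp add: w_def)
    then have "norm v \<le> 1" by (simp add: norm_eq_sqrt_inner)
    moreover have "v $ i = N s $ i $ j"
      by (simp add: v_def w_def matrix_vector_mult_def axis_def if_distrib if_distribR sum.delta' cong: if_cong)
    ultimately show ?thesis using component_le_norm_cart[of v i] by simp
  qed
  have nN: "norm (N s) \<le> real (CARD('n) * CARD('n))" for s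
  proof -
    have "norm (N s) \<le> (\<Sum>i\<in>UNIV. norm (N s $ i))"
      unfolding norm_vec_def by (rule L2_set_le_sum) simp
    also have "\<dots> \<le> (\<Sum>i\<in>(UNIV::'n set). \<Sum>j\<in>(UNIV::'n set). \<bar>N s $ i $ j\<bar>)"
      by (intro sum_mono norm_le_l1_cart)
    also have "\<dots> \<le> (\<Sum>i\<in>(UNIV::'n set). \<Sum>j\<in>(UNIV::'n set). 1)"
      by (intro sum_mono entry)
    finally show ?thesis by simp
  qed
  define C where "C s = P s ** N s" for s
  have trP: "transpose (P s) = A s" for s
    using sk by (simp add: P_def A_def tr_add transpose_scalar)
  have comm: "A s ** P s = P s ** A s" for s
    by (simp add: P_def A_def matrix_add_ldistrib mm_rdistrib mm_ldiff mm_rdiff mm_sR mm_sL algebra_simps)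
  have orth: "orthogonal_matrix (C s)" for s
  proof -
    have "transpose (C s) ** C s = transpose (N s) ** (A s ** P s) ** N s"
      by (simp add: C_def matrix_transpose_mul trP matrix_mul_assoc)
    also have "\<dots> = transpose (N s) ** P s ** (A s ** N s)"
      by (simp add: comm matrix_mul_assoc)
    also have "\<dots> = transpose (transpose (P s) ** N s)"
      using inv[of s] by (simp add: matrix_transpose_mul)
    also have "\<dots> = mat 1" using inv[of s] by (simp add: trP)
    finally show ?thesis by (simp add: orthogonal_matrix)
  qed
  have C0: "C 0 = mat 1"
  proof -
    have "A 0 = mat 1" "P 0 = mat 1" by (simp_all add: A_def P_def)
    then show ?thesis using inv[of 0] by (simp add: C_def)
  qed
  have Nexp: "N s = mat 1 + (s/2) *\<^sub>R (Om ** N s)" for s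
  proof -
    have "A s ** N s = N s - (s/2) *\<^sub>R (Om ** N s)"
      by (simp add: A_def mm_rdiff mm_sL)
    then show ?thesis using inv[of s] by (simp add: algebra_simps)
  qed
  define M where "M s = Om ** Om ** N s" for s
  have Cexp: "C s - C 0 - (s - 0) *\<^sub>R Om = (s * s / 2) *\<^sub>R M s" for s
  proof -
    have "C s = N s + (s/2) *\<^sub>R (Om ** N s)"
      by (simp add: C_def P_def mm_rdistrib mm_sL)
    also have "\<dots> = mat 1 + s *\<^sub>R (Om ** N s)"
      by (subst Nexp) (simp add: algebra_simps scaleR_add_left[symmetric])
    also have "Om ** N s = Om + (s/2) *\<^sub>R M s"
      by (subst Nexp) (simp add: M_def matrix_add_ldistrib mm_sR matrix_mul_assoc)
    finally have "C s = mat 1 + s *\<^sub>R Om + (s * s / 2) *\<^sub>R M s"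
      by (simp add: algebra_simps)
    then show ?thesis using C0 by simp
  qed
  obtain K where K: "\<And>a b. norm ((a::real^'n^'n) ** (b::real^'n^'n)) \<le> norm a * norm b * K" "K > 0"
    using bounded_bilinear.pos_bounded[OF bb_mm] by blast
  define B where "B = norm (Om ** Om) * real (CARD('n) * CARD('n)) * K"
  have B0: "B \<ge> 0" using K by (simp add: B_def)
  have nM: "norm (M s) \<le> B" for s
  proof -
    have "norm (M s) \<le> norm (Om ** Om) * norm (N s) * K" using K(1) by (simp add: M_def)
    also have "\<dots> \<le> B" unfolding B_def
      using nN[of s] K(2) by (intro mult_right_mono mult_left_mono) auto
    finally show ?thesis .
  qed
  have "(C has_vector_derivative Om) (at 0)"
    unfolding has_vector_derivative_def has_derivative_iff_norm
  proof (intro conjI bounded_linear_scaleR_left)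
    show "((\<lambda>y. norm (C y - C 0 - (y - 0) *\<^sub>R Om) / norm (y - 0)) \<longlongrightarrow> 0) (at 0)"
    proof (rule Lim_null_comparison)
      show "\<forall>\<^sub>F y in at 0. norm (norm (C y - C 0 - (y - 0) *\<^sub>R Om) / norm (y - 0)) \<le> \<bar>y\<bar> * B"
      proof (intro always_eventually allI)
        fix y :: real
        have "norm (norm (C y - C 0 - (y - 0) *\<^sub>R Om) / norm (y - 0)) = \<bar>y\<bar> / 2 * norm (M y)"
        proof -
          have e: "norm (C y - C 0 - (y - 0) *\<^sub>R Om) = \<bar>y\<bar> * \<bar>y\<bar> / 2 * norm (M y)"
            unfolding Cexp by (simp add: abs_mult)
          show ?thesis unfolding e by (cases "y = 0") (simp, rule aux_nn, simp_all)
        qed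
        also have "\<dots> \<le> \<bar>y\<bar> * B" using nM[of y] B0
        proof -
          have "\<bar>y\<bar> / 2 * norm (M y) \<le> \<bar>y\<bar> / 2 * B" using nM[of y] by (intro mult_left_mono) auto
          also have "\<dots> \<le> \<bar>y\<bar> * B" using B0 by (intro mult_right_mono) auto
          finally show ?thesis .
        qed
        finally show "norm (norm (C y - C 0 - (y - 0) *\<^sub>R Om) / norm (y - 0)) \<le> \<bar>y\<bar> * B" .
      qed
      show "((\<lambda>y. \<bar>y\<bar> * B) \<longlongrightarrow> 0) (at 0)"
        by (rule tendsto_mult_left_zero, rule tendsto_rabs_zero, rule tendsto_ident_at)
    qed
  qed
  then show ?thesis using orth C0 by blast
qed



lemma bl_conj: "bounded_linear (\<lambda>X::real^'n^'n. (A::real^'n^'n) ** X ** (B::real^'n^'n))"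
proof -
  have "linear (\<lambda>X::real^'n^'n. A ** X ** B)"
    by (auto intro!: linearI simp: matrix_add_ldistrib mm_rdistrib mm_sR mm_sL)
  then show ?thesis using linear_conv_bounded_linear by blast
qed

lemma orth_tr: "orthogonal_matrix (V::real^'n^'n) \<Longrightarrow> transpose V ** V = mat 1 \<and> V ** transpose V = mat 1"
  by (simp add: orthogonal_matrix_def)

lemma neg_mm_l: "(- (A::real^'n^'n)) ** B = - (A ** B)"
  by (simp add: matrix_matrix_mult_def vec_eq_iff sum_negf)

lemma neg_mm_r: "(A::real^'n^'n) ** (- B) = - (A ** B)"
  by (simp add: matrix_matrix_mult_def vec_eq_iff sum_negf)

lemma tangent_in:
  fixes V Om :: "real^'n^'n" and ix :: "'n \<Rightarrow> nat"
  assumes orth: "orthogonal_matrix V" and sk: "transpose Om = - Om"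
  shows "conj_tuple d V (\<lambda>k. Om ** Jmat d ns ix k - Jmat d ns ix k ** Om)
           \<in> tangent_space (flag d ns ix) (conj_tuple d V (Jmat d ns ix))"
proof -
  obtain C where C: "\<forall>s. orthogonal_matrix (C s)" "C 0 = mat 1" "(C has_vector_derivative Om) (at 0)"
    using cayley[OF sk] by blast
  define W where "W s = V ** C s" for s
  have W0: "W 0 = V" using C(2) by (simp add: W_def)
  have dW: "(W has_vector_derivative V ** Om) (at 0)"
    unfolding W_def using bounded_linear.has_vector_derivative[OF bounded_bilinear.bounded_linear_right[OF bb_mm] C(3)] .
  define \<gamma> where "\<gamma> s = conj_tuple d (W s) (Jmat d ns ix)" for s
  have inS: "\<gamma> s \<in> flag d ns ix" for s
    unfolding \<gamma>_def flag_def W_def using orthogonal_matrix_mul[OF orth C(1)[rule_format, of s]] by blast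
  have g0: "\<gamma> 0 = conj_tuple d V (Jmat d ns ix)" by (simp add: \<gamma>_def W0)
  have der: "((\<lambda>s. \<gamma> s k) has_vector_derivative conj_tuple d V (\<lambda>k. Om ** Jmat d ns ix k - Jmat d ns ix k ** Om) k) (at 0)" for k
  proof (cases "k \<in> {1..d}")
    case True
    let ?J = "Jmat d ns ix k"
    have d1: "((\<lambda>s. W s ** ?J) has_vector_derivative V ** Om ** ?J) (at 0)"
      using bounded_linear.has_vector_derivative[OF bounded_bilinear.bounded_linear_left[OF bb_mm] dW] .
    have d2: "((\<lambda>s. transpose (W s)) has_vector_derivative transpose (V ** Om)) (at 0)"
      using bounded_linear.has_vector_derivative[OF bl_tr dW] .
    have d3: "((\<lambda>s. W s ** ?J ** transpose (W s)) has_vector_derivative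
        (W 0 ** ?J ** transpose (V ** Om) + V ** Om ** ?J ** transpose (W 0))) (at 0)"
      using bounded_bilinear.has_vector_derivative[OF bb_mm d1 d2] .
    have eq: "W 0 ** ?J ** transpose (V ** Om) + V ** Om ** ?J ** transpose (W 0)
        = V ** (Om ** ?J - ?J ** Om) ** transpose V"
      using sk by (simp add: W0 matrix_transpose_mul mm_rdiff mm_ldiff matrix_mul_assoc neg_mm_l neg_mm_r)
    show ?thesis using d3 True unfolding eq by (simp add: \<gamma>_def conj_tuple_def)
  next
    case False
    then have "(\<lambda>s. \<gamma> s k) = (\<lambda>s. 0)" "conj_tuple d V (\<lambda>k. Om ** Jmat d ns ix k - Jmat d ns ix k ** Om) k = 0"
      by (auto simp: \<gamma>_def conj_tuple_def fun_eq_iff)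
    then show ?thesis by simp
  qed
  show ?thesis unfolding tangent_space_def using inS g0 der by blast
qed




lemma tangent_props:
  fixes V :: "real^'n^'n" and ix :: "'n \<Rightarrow> nat"
  assumes orth: "orthogonal_matrix V"
    and u: "u \<in> tangent_space (flag d ns ix) (conj_tuple d V (Jmat d ns ix))"
  shows "\<forall>k. k \<notin> {1..d} \<longrightarrow> u k = 0"
    and "\<forall>k\<in>{1..d}. (transpose V ** u k ** V) ** Jmat d ns ix k + Jmat d ns ix k ** (transpose V ** u k ** V) = 0"
    and "\<forall>k\<in>{1..d}. \<forall>q\<in>{1..d}. k \<noteq> q \<longrightarrow>
           (transpose V ** u k ** V) ** (Jmat d ns ix q + mat 1) + (Jmat d ns ix k + mat 1) ** (transpose V ** u q ** V) = 0"
proof -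
  obtain \<gamma> where g: "\<forall>t. \<gamma> t \<in> flag d ns ix" "\<gamma> 0 = conj_tuple d V (Jmat d ns ix)"
     "\<forall>k. ((\<lambda>t. \<gamma> t k) has_vector_derivative u k) (at 0)"
    using u unfolding tangent_space_def by blast
  have "\<forall>s. \<exists>W. orthogonal_matrix W \<and> \<gamma> s = conj_tuple d W (Jmat d ns ix)"
    using g(1) unfolding flag_def by blast
  then obtain W where W: "\<And>s. orthogonal_matrix (W s)" "\<And>s. \<gamma> s = conj_tuple d (W s) (Jmat d ns ix)"
    by metis
  define E where "E k = transpose V ** u k ** V" for k
  define M where "M k s = transpose V ** \<gamma> s k ** V" for k s
  define U where "U s = transpose V ** W s" for s
  have U: "orthogonal_matrix (U s)" for s
    unfolding U_def by (rule orthogonal_matrix_mul) (use orth W in \<open>simp_all add: orthogonal_matrix_def\<close>)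
  have MU: "M k s = U s ** Jmat d ns ix k ** transpose (U s)" if "k \<in> {1..d}" for k s
    using that by (simp add: M_def U_def W(2) conj_tuple_def matrix_transpose_mul matrix_mul_assoc)
  have M0: "M k 0 = Jmat d ns ix k" if "k \<in> {1..d}" for k
    using that orth by (simp add: M_def g(2) conj_tuple_def matrix_mul_assoc orthogonal_matrix_def)
      (metis matrix_mul_assoc matrix_mul_lid matrix_mul_rid)
  have dM: "(M k has_vector_derivative E k) (at 0)" for k
    unfolding M_def E_def using bounded_linear.has_vector_derivative[OF bl_conj g(3)[rule_format, of k]] .
  show "\<forall>k. k \<notin> {1..d} \<longrightarrow> u k = 0"
  proof (intro allI impI)
    fix k assume k: "k \<notin> {1..d}"
    then have "(\<lambda>t. \<gamma> t k) = (\<lambda>t. 0)" by (auto simp: W(2) conj_tuple_def)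
    then show "u k = 0" using g(3) vector_derivative_unique_at has_vector_derivative_const by metis
  qed
  show "\<forall>k\<in>{1..d}. E k ** Jmat d ns ix k + Jmat d ns ix k ** E k = 0"
    unfolding E_def[symmetric]
  proof
    fix k assume k: "k \<in> {1..d}"
    have c: "(\<lambda>s. M k s ** M k s) = (\<lambda>s. mat 1)"
    proof
      fix s
      have "M k s ** M k s = U s ** Jmat d ns ix k ** (transpose (U s) ** U s) ** Jmat d ns ix k ** transpose (U s)"
        using k by (simp add: MU matrix_mul_assoc)
      also have "\<dots> = mat 1" using U[of s] by (simp add: orthogonal_matrix_def J_sq matrix_mul_assoc[symmetric])
      finally show "M k s ** M k s = mat 1" .
    qed
    have "((\<lambda>s. M k s ** M k s) has_vector_derivative (M k 0 ** E k + E k ** M k 0)) (at 0)"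
      using bounded_bilinear.has_vector_derivative[OF bb_mm dM dM] .
    then have "((\<lambda>s. mat 1 :: real^'n^'n) has_vector_derivative (Jmat d ns ix k ** E k + E k ** Jmat d ns ix k)) (at 0)"
      unfolding c M0[OF k] .
    then have "Jmat d ns ix k ** E k + E k ** Jmat d ns ix k = 0"
      using vector_derivative_unique_at has_vector_derivative_const by blast
    then show "E k ** Jmat d ns ix k + Jmat d ns ix k ** E k = 0" by (simp add: add.commute)
  qed
  show "\<forall>k\<in>{1..d}. \<forall>q\<in>{1..d}. k \<noteq> q \<longrightarrow>
           E k ** (Jmat d ns ix q + mat 1) + (Jmat d ns ix k + mat 1) ** E q = 0"
    unfolding E_def[symmetric]
  proof (intro ballI impI)
    fix k q assume k: "k \<in> {1..d}" and q: "q \<in> {1..d}" and kq: "k \<noteq> q"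
    have Mp: "M k s + mat 1 = U s ** (Jmat d ns ix k + mat 1) ** transpose (U s)" if "k \<in> {1..d}" for k s
      using U[of s] that by (simp add: MU matrix_add_ldistrib mm_rdistrib orthogonal_matrix_def)
    have c: "(\<lambda>s. (M k s + mat 1) ** (M q s + mat 1)) = (\<lambda>s. 0)"
    proof
      fix s
      have "(M k s + mat 1) ** (M q s + mat 1) = U s ** (Jmat d ns ix k + mat 1) ** (transpose (U s) ** U s) ** (Jmat d ns ix q + mat 1) ** transpose (U s)"
        using k q by (simp add: Mp matrix_mul_assoc)
      also have "\<dots> = 0" using U[of s] kq by (simp add: orthogonal_matrix_def J_orth matrix_mul_assoc[symmetric])
      finally show "(M k s + mat 1) ** (M q s + mat 1) = 0" .
    qed
    have dk: "((\<lambda>s. M k s + mat 1) has_vector_derivative E k) (at 0)"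
      using has_vector_derivative_add[OF dM has_vector_derivative_const] by simp
    have dq: "((\<lambda>s. M q s + mat 1) has_vector_derivative E q) (at 0)"
      using has_vector_derivative_add[OF dM has_vector_derivative_const] by simp
    have "((\<lambda>s. (M k s + mat 1) ** (M q s + mat 1)) has_vector_derivative ((M k 0 + mat 1) ** E q + E k ** (M q 0 + mat 1))) (at 0)"
      using bounded_bilinear.has_vector_derivative[OF bb_mm dk dq] .
    then have "((\<lambda>s. 0 :: real^'n^'n) has_vector_derivative ((Jmat d ns ix k + mat 1) ** E q + E k ** (Jmat d ns ix q + mat 1))) (at 0)"
      unfolding c M0[OF k] M0[OF q] .
    then have "(Jmat d ns ix k + mat 1) ** E q + E k ** (Jmat d ns ix q + mat 1) = 0"
      using vector_derivative_unique_at has_vector_derivative_const by blast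
    then show "E k ** (Jmat d ns ix q + mat 1) + (Jmat d ns ix k + mat 1) ** E q = 0" by (simp add: add.commute)
  qed
qed




lemma core_entry:
  fixes Af Zf Ef :: "nat \<Rightarrow> real" and g :: real and bi bj d :: nat
  assumes rng: "1 \<le> bi" "bi \<le> d+1" "1 \<le> bj" "bj \<le> d+1"
  and R1: "\<forall>k\<in>{1..d}. (bi = k) = (bj = k) \<longrightarrow> Ef k = 0"
  and R2: "\<forall>k\<in>{1..d}. \<forall>q\<in>{1..d}. k \<noteq> q \<longrightarrow> bi = k \<longrightarrow> bj = q \<longrightarrow> Ef k + Ef q = 0"
  and Aent: "\<forall>k\<in>{1..d}. (bi = k \<or> bj = k) \<longrightarrow> Af k = - g"
  and Zent: "\<forall>k\<in>{1..d}. Zf k = (if (bi = k \<and> bj = d+1) \<or> (bi = d+1 \<and> bj = k) then - g else 0)"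
  shows "(\<Sum>k\<in>{1..d}. (Af k - Zf k) * Ef k) = 0"
proof (cases "bi \<noteq> bj \<and> bi \<le> d \<and> bj \<le> d")
  case True
  have z: "(Af k - Zf k) * Ef k = 0" if "k \<in> {1..d} - {bi, bj}" for k
    using that R1 by auto
  have "(\<Sum>k\<in>{1..d}. (Af k - Zf k) * Ef k) = (\<Sum>k\<in>{bi, bj}. (Af k - Zf k) * Ef k)"
    using True rng z by (intro sum.mono_neutral_right) auto
  also have "\<dots> = (Af bi - Zf bi) * Ef bi + (Af bj - Zf bj) * Ef bj" using True by simp
  also have "\<dots> = - g * (Ef bi + Ef bj)" using True rng Aent Zent by (simp add: algebra_simps)
  also have "\<dots> = 0" using True rng R2 by simp
  finally show ?thesis .
next
  case False
  have "(Af k - Zf k) * Ef k = 0" if "k \<in> {1..d}" for k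
  proof (cases "(bi = k) = (bj = k)")
    case True then show ?thesis using R1 that by simp
  next
    case F2: False
    then have "bi \<noteq> bj" by auto
    with False have "bi = d+1 \<or> bj = d+1" using rng by auto
    then show ?thesis using F2 Aent Zent that by auto
  qed
  then show ?thesis by (intro sum.neutral) blast
qed




lemma mm_entry: "((A::real^'n^'n) ** B) $ i $ j = (\<Sum>r\<in>UNIV. A$i$r * B$r$j)"
  by (simp add: matrix_matrix_mult_def)

lemma skew_entry: "transpose (A::real^'n^'n) = - A \<Longrightarrow> A$r$i = - A$i$r"
proof -
  assume a: "transpose A = - A"
  have "(transpose A)$i$r = (-A)$i$r" using a by simp
  then show ?thesis by (simp add: transpose_def)
qed

lemma A_entry:
  fixes Lam X :: "real^'n^'n" and ix :: "'n \<Rightarrow> nat"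
  assumes Ld: "\<forall>i r. blk d ns ix i = blk d ns ix r \<longrightarrow> Lam$i$r = 0"
    and Xd: "\<forall>i r. blk d ns ix i = blk d ns ix r \<longrightarrow> X$i$r = 0"
    and k: "blk d ns ix i = k \<or> blk d ns ix j = k"
  shows "(Lam ** Jmat d ns ix k ** X + X ** Jmat d ns ix k ** Lam) $ i $ j = - (Lam ** X + X ** Lam) $ i $ j"
proof -
  have 1: "(Lam ** Jmat d ns ix k ** X) $ i $ j = (\<Sum>r\<in>UNIV. - (Lam$i$r * X$r$j))"
    unfolding mm_entry[of "Lam ** Jmat d ns ix k"]
  proof (rule sum.cong[OF refl])
    fix r
    have z: "Lam$i$r * X$r$j = 0" if br: "blk d ns ix r = k"
    proof (cases "blk d ns ix i = k")
      case True then have "Lam$i$r = 0 \<and> X$i$r = 0" using br Ld Xd by simp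
      then show ?thesis by simp
    next
      case False then have "blk d ns ix j = k" using k by simp
      then have "Lam$r$j = 0 \<and> X$r$j = 0" using br Ld Xd by simp
      then show ?thesis by simp
    qed
    show "(Lam ** Jmat d ns ix k)$i$r * X$r$j = - (Lam$i$r * X$r$j)"
      using z by (cases "blk d ns ix r = k") (simp_all add: J_right)
  qed
  have 2: "(X ** Jmat d ns ix k ** Lam) $ i $ j = (\<Sum>r\<in>UNIV. - (X$i$r * Lam$r$j))"
    unfolding mm_entry[of "X ** Jmat d ns ix k"]
  proof (rule sum.cong[OF refl])
    fix r
    have z: "X$i$r * Lam$r$j = 0" if br: "blk d ns ix r = k"
    proof (cases "blk d ns ix i = k")
      case True then have "Lam$i$r = 0 \<and> X$i$r = 0" using br Ld Xd by simp
      then show ?thesis by simp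
    next
      case False then have "blk d ns ix j = k" using k by simp
      then have "Lam$r$j = 0 \<and> X$r$j = 0" using br Ld Xd by simp
      then show ?thesis by simp
    qed
    show "(X ** Jmat d ns ix k)$i$r * Lam$r$j = - (X$i$r * Lam$r$j)"
      using z by (cases "blk d ns ix r = k") (simp_all add: J_right)
  qed
  show ?thesis using 1 2 by (simp add: mm_entry sum_negf)
qed

lemma Z_entry:
  fixes Lam X :: "real^'n^'n" and ix :: "'n \<Rightarrow> nat"
  assumes rng: "\<forall>i. 1 \<le> blk d ns ix i \<and> blk d ns ix i \<le> d+1"
    and Ld: "\<forall>i r. blk d ns ix i = blk d ns ix r \<longrightarrow> Lam$i$r = 0"
    and Xd: "\<forall>i r. blk d ns ix i = blk d ns ix r \<longrightarrow> X$i$r = 0"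
    and LS: "transpose Lam = - Lam" and XS: "transpose X = - X"
    and k: "k \<in> {1..d}"
  shows "Zmat d ns ix Lam X k $ i $ j =
     (if (blk d ns ix i = k \<and> blk d ns ix j = d+1) \<or> (blk d ns ix i = d+1 \<and> blk d ns ix j = k)
      then - (Lam ** X + X ** Lam) $ i $ j else 0)"
proof -
  let ?b = "blk d ns ix"
  let ?B = "blockM d ns ix"
  let ?L = "{1..d} - {k}"
  have sw: "Lam$r$i * X$j$r = Lam$i$r * X$r$j" for r
    using skew_entry[OF LS, of r i] skew_entry[OF XS, of j r] by simp
  have kd: "k \<noteq> d+1" "d+1 \<noteq> k" using k by auto
  define h where "h r = X$i$r * Lam$r$j + Lam$i$r * X$r$j" for r
  have fin: "- (\<Sum>l\<in>?L. \<Sum>r\<in>UNIV. if ?b r = l then h r else 0) = - (Lam ** X + X ** Lam) $ i $ j"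
    if ij: "(?b i = k \<and> ?b j = d+1) \<or> (?b i = d+1 \<and> ?b j = k)"
  proof -
    have "(\<Sum>l\<in>?L. \<Sum>r\<in>UNIV. if ?b r = l then h r else 0) = (\<Sum>r\<in>UNIV. \<Sum>l\<in>?L. if ?b r = l then h r else 0)"
      by (rule sum.swap)
    also have "\<dots> = (\<Sum>r\<in>UNIV. if ?b r \<in> ?L then h r else 0)"
      by (simp add: sum.delta)
    also have "\<dots> = (\<Sum>r\<in>UNIV. h r)"
    proof (rule sum.cong)
      fix r
      have "h r = 0" if nL: "?b r \<notin> ?L"
      proof -
        have "?b r = k \<or> ?b r = d+1" using rng[rule_format, of r] nL by auto
        then show ?thesis
        proof
          assume "?b r = k"
          then show ?thesis using ij Ld[rule_format, of i r] Xd[rule_format, of i r]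
             Ld[rule_format, of r j] Xd[rule_format, of r j] kd unfolding h_def by (cases "?b i = k") simp_all
        next
          assume "?b r = d+1"
          then show ?thesis using ij Ld[rule_format, of i r] Xd[rule_format, of i r]
             Ld[rule_format, of r j] Xd[rule_format, of r j] kd unfolding h_def by (cases "?b i = k") simp_all
        qed
      qed
      then show "(if ?b r \<in> ?L then h r else 0) = h r" by auto
    qed simp
    also have "\<dots> = (Lam ** X + X ** Lam) $ i $ j"
      by (simp add: h_def mm_entry sum.distrib add.commute)
    finally show ?thesis by simp
  qed
  show ?thesis
  proof (cases "?b i = k \<and> ?b j = d+1")
    case True
    have t1: "(?B X k l ** ?B Lam l (d+1)) $ i $ j = (\<Sum>r\<in>UNIV. if ?b r = l then X$i$r * Lam$r$j else 0)" for l
      unfolding mm_entry by (rule sum.cong) (use True in \<open>simp_all add: blockM_def\<close>)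
    have t2: "(transpose (?B Lam l k) ** transpose (?B X (d+1) l)) $ i $ j = (\<Sum>r\<in>UNIV. if ?b r = l then Lam$i$r * X$r$j else 0)" for l
      unfolding mm_entry by (rule sum.cong) (use True sw in \<open>simp_all add: blockM_def transpose_def\<close>)
    have "Zmat d ns ix Lam X k $ i $ j = - (\<Sum>l\<in>?L. (?B X k l ** ?B Lam l (d+1)) $ i $ j + (transpose (?B Lam l k) ** transpose (?B X (d+1) l)) $ i $ j)"
      unfolding Zmat_def Let_def vec_lambda_beta using True
      by (simp only: simp_thms if_True vector_uminus_component sum_component vector_add_component)
    also have "\<dots> = - (\<Sum>l\<in>?L. \<Sum>r\<in>UNIV. if ?b r = l then h r else 0)"
      unfolding t1 t2 sum.distrib[symmetric] h_def by (intro arg_cong[where f=uminus] sum.cong refl) simp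
    finally show ?thesis using fin True by simp
  next
    case F1: False
    show ?thesis
    proof (cases "?b i = d+1 \<and> ?b j = k")
      case True
      have t1: "(?B X (d+1) l ** ?B Lam l k) $ i $ j = (\<Sum>r\<in>UNIV. if ?b r = l then X$i$r * Lam$r$j else 0)" for l
        unfolding mm_entry by (rule sum.cong) (use True in \<open>simp_all add: blockM_def\<close>)
      have t2: "(transpose (?B Lam l (d+1)) ** transpose (?B X k l)) $ i $ j = (\<Sum>r\<in>UNIV. if ?b r = l then Lam$i$r * X$r$j else 0)" for l
        unfolding mm_entry by (rule sum.cong) (use True sw in \<open>simp_all add: blockM_def transpose_def\<close>)
      have "Zmat d ns ix Lam X k $ i $ j = - (\<Sum>l\<in>?L. (?B X (d+1) l ** ?B Lam l k) $ i $ j + (transpose (?B Lam l (d+1)) ** transpose (?B X k l)) $ i $ j)"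
        unfolding Zmat_def Let_def vec_lambda_beta using True kd
        by (simp only: simp_thms if_True if_False vector_uminus_component sum_component vector_add_component)
      also have "\<dots> = - (\<Sum>l\<in>?L. \<Sum>r\<in>UNIV. if ?b r = l then h r else 0)"
        unfolding t1 t2 sum.distrib[symmetric] h_def by (intro arg_cong[where f=uminus] sum.cong refl) simp
      finally show ?thesis using fin True by simp
    next
      case False
      then show ?thesis using F1 unfolding Zmat_def Let_def vec_lambda_beta
        by (simp only: simp_thms if_True if_False)
    qed
  qed
qed




lemma inner_entries: "inner (M::real^'n^'n) N = (\<Sum>i\<in>UNIV. \<Sum>j\<in>UNIV. M$i$j * N$i$j)"
  by (simp add: inner_vec_def)

lemma tup_inner_diff_left: "tup_inner d (a - b) w = tup_inner d a w - tup_inner d b w"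
  by (simp add: tup_inner_def inner_diff_left sum_subtractf)

lemma tup_inner_diff_right: "tup_inner d w (a - b) = tup_inner d w a - tup_inner d w b"
  by (simp add: tup_inner_def inner_diff_right sum_subtractf)

theorem lemmaA2:
  fixes d :: nat and ns :: "nat \<Rightarrow> nat" and ix :: "'n::finite \<Rightarrow> nat"
    and V V' Lam X :: "real \<Rightarrow> real^'n^'n"
  assumes ix: "bij_betw ix UNIV {..<CARD('n)}"
    and d: "1 \<le> d"
    and ns_pos: "0 < ns 1"
    and ns_mono: "\<forall>k. 1 \<le> k \<and> k < d \<longrightarrow> ns k < ns (Suc k)"
    and ns_lt: "ns d < CARD('n)"
    and V_orth: "\<forall>t. orthogonal_matrix (V t)"
    and V_deriv: "\<forall>t. (V has_vector_derivative V' t) (at t)"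
    and Lam_def: "\<forall>t. Lam t = transpose (V t) ** V' t"
    and Lam_diag: "\<forall>t k. k \<in> {1..d+1} \<longrightarrow> blockM d ns ix (Lam t) k k = 0"
    and X_diff: "\<forall>t. X differentiable (at t)"
    and X_skew: "\<forall>t. transpose (X t) = - X t"
    and X_diag: "\<forall>t k. k \<in> {1..d+1} \<longrightarrow> blockM d ns ix (X t) k k = 0"
  shows "\<forall>t. orth_proj d
              (tangent_space (flag d ns ix) (conj_tuple d (V t) (Jmat d ns ix)))
              (conj_tuple d (V t) (\<lambda>k. Lam t ** Jmat d ns ix k ** X t + X t ** Jmat d ns ix k ** Lam t))
           = conj_tuple d (V t) (Zmat d ns ix (Lam t) (X t))"
proof
  fix t
  let ?b = "blk d ns ix"
  let ?J = "Jmat d ns ix"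
  define V0 where "V0 = V t"
  define L where "L = Lam t"
  define Xt where "Xt = X t"
  define S where "S = tangent_space (flag d ns ix) (conj_tuple d V0 ?J)"
  define y where "y = conj_tuple d V0 (\<lambda>k. L ** ?J k ** Xt + Xt ** ?J k ** L)"
  define P where "P = conj_tuple d V0 (Zmat d ns ix L Xt)"
  have orthV: "orthogonal_matrix V0" using V_orth by (simp add: V0_def)
  have LS: "transpose L = - L"
    using skew_deriv[OF V_orth V_deriv[rule_format, of t]] Lam_def by (simp add: L_def)
  have XS: "transpose Xt = - Xt" using X_skew by (simp add: Xt_def)
  have rng: "\<forall>i. 1 \<le> ?b i \<and> ?b i \<le> d+1" using blk_range[OF ix] by blast
  have Ld: "\<forall>i r. ?b i = ?b r \<longrightarrow> L$i$r = 0"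
  proof (intro allI impI)
    fix i r assume e: "?b i = ?b r"
    have "blockM d ns ix L (?b i) (?b i) = 0" using Lam_diag rng by (simp add: L_def)
    then have "blockM d ns ix L (?b i) (?b i) $ i $ r = 0" by simp
    then show "L$i$r = 0" using e by (simp add: blockM_def)
  qed
  have Xd: "\<forall>i r. ?b i = ?b r \<longrightarrow> Xt$i$r = 0"
  proof (intro allI impI)
    fix i r assume e: "?b i = ?b r"
    have "blockM d ns ix Xt (?b i) (?b i) = 0" using X_diag rng by (simp add: Xt_def)
    then have "blockM d ns ix Xt (?b i) (?b i) $ i $ r = 0" by simp
    then show "Xt$i$r = 0" using e by (simp add: blockM_def)
  qed
  define G where "G = L ** Xt + Xt ** L"
  have GS: "G$j$i = G$i$j" for i j
  proof -
    have "transpose G = G"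
      using LS XS by (simp add: G_def tr_add matrix_transpose_mul neg_mm_l neg_mm_r add.commute)
    then have "(transpose G)$i$j = G$i$j" by simp
    then show ?thesis by (simp add: transpose_def)
  qed
  have Zent: "Zmat d ns ix L Xt k $ i $ j =
     (if (?b i = k \<and> ?b j = d+1) \<or> (?b i = d+1 \<and> ?b j = k) then - G $ i $ j else 0)" if "k \<in> {1..d}" for k i j
    unfolding G_def by (rule Z_entry[OF rng Ld Xd LS XS that])
  have Aent: "(L ** ?J k ** Xt + Xt ** ?J k ** L) $ i $ j = - G $ i $ j" if "?b i = k \<or> ?b j = k" for k i j
    unfolding G_def by (rule A_entry[OF Ld Xd that])
  define Om :: "real^'n^'n" where "Om = (\<chi> i j. if ?b j = d+1 \<and> ?b i \<noteq> d+1 then G$i$j / 2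
      else if ?b i = d+1 \<and> ?b j \<noteq> d+1 then - G$i$j / 2 else 0)"
  have OmS: "transpose Om = - Om"
    by (auto simp: Om_def transpose_def vec_eq_iff GS)
  have OmZ: "Om ** ?J k - ?J k ** Om = Zmat d ns ix L Xt k" if k: "k \<in> {1..d}" for k
  proof -
    have "(Om ** ?J k - ?J k ** Om) $ i $ j = Zmat d ns ix L Xt k $ i $ j" for i j
      unfolding vector_minus_component J_right J_left Zent[OF k] using k
      by (auto simp: Om_def)
    then show ?thesis by (simp add: vec_eq_iff)
  qed
  have PS: "P \<in> S"
  proof -
    have "conj_tuple d V0 (\<lambda>k. Om ** ?J k - ?J k ** Om) = P"
      using OmZ by (auto simp: P_def conj_tuple_def fun_eq_iff)
    then show ?thesis using tangent_in[OF orthV OmS, of d ns ix] unfolding S_def by simp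
  qed
  have perp: "tup_inner d (y - P) u = 0" if u: "u \<in> S" for u
  proof -
    note tp = tangent_props[OF orthV u[unfolded S_def]]
    define E where "E k = transpose V0 ** u k ** V0" for k
    define A where "A k = L ** ?J k ** Xt + Xt ** ?J k ** L" for k
    have "tup_inner d (y - P) u = (\<Sum>k\<in>{1..d}. inner (A k - Zmat d ns ix L Xt k) (E k))"
      unfolding tup_inner_def
    proof (rule sum.cong[OF refl])
      fix k assume k: "k \<in> {1..d}"
      have "(y - P) k = V0 ** (A k - Zmat d ns ix L Xt k) ** transpose V0"
        using k by (simp add: y_def P_def A_def conj_tuple_def mm_rdiff mm_ldiff)
      then show "inner ((y - P) k) (u k) = inner (A k - Zmat d ns ix L Xt k) (E k)"
        by (simp add: inner_conj E_def)
    qed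
    also have "\<dots> = (\<Sum>k\<in>{1..d}. \<Sum>i\<in>UNIV. \<Sum>j\<in>UNIV. (A k $ i $ j - Zmat d ns ix L Xt k $ i $ j) * E k $ i $ j)"
      by (simp add: inner_entries)
    also have "\<dots> = (\<Sum>i\<in>UNIV. \<Sum>k\<in>{1..d}. \<Sum>j\<in>UNIV. (A k $ i $ j - Zmat d ns ix L Xt k $ i $ j) * E k $ i $ j)"
      by (rule sum.swap)
    also have "\<dots> = (\<Sum>i\<in>UNIV. \<Sum>j\<in>UNIV. \<Sum>k\<in>{1..d}. (A k $ i $ j - Zmat d ns ix L Xt k $ i $ j) * E k $ i $ j)"
      by (rule sum.cong[OF refl], rule sum.swap)
    also have "\<dots> = 0"
    proof (rule sum.neutral, rule ballI, rule sum.neutral, rule ballI)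
      fix i j
      show "(\<Sum>k\<in>{1..d}. (A k $ i $ j - Zmat d ns ix L Xt k $ i $ j) * E k $ i $ j) = 0"
      proof (rule core_entry[where bi = "?b i" and bj = "?b j" and g = "G$i$j"])
        show "1 \<le> ?b i" "?b i \<le> d+1" "1 \<le> ?b j" "?b j \<le> d+1" using rng by auto
        show "\<forall>k\<in>{1..d}. (?b i = k \<or> ?b j = k) \<longrightarrow> A k $ i $ j = - G$i$j"
          using Aent by (simp add: A_def)
        show "\<forall>k\<in>{1..d}. Zmat d ns ix L Xt k $ i $ j = (if (?b i = k \<and> ?b j = d+1) \<or> (?b i = d+1 \<and> ?b j = k) then - G$i$j else 0)"
          using Zent by blast
        show "\<forall>k\<in>{1..d}. (?b i = k) = (?b j = k) \<longrightarrow> E k $ i $ j = 0"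
        proof (intro ballI impI)
          fix k assume k: "k \<in> {1..d}" and eq: "(?b i = k) = (?b j = k)"
          have "(E k ** ?J k + ?J k ** E k) $ i $ j = 0" using tp(2) k by (simp add: E_def)
          then have "E k $ i $ j * (if ?b j = k then 1 else -1) + (if ?b i = k then 1 else -1) * E k $ i $ j = 0"
            by (simp add: J_right J_left)
          then show "E k $ i $ j = 0" using eq by (cases "?b i = k") simp_all
        qed
        show "\<forall>k\<in>{1..d}. \<forall>q\<in>{1..d}. k \<noteq> q \<longrightarrow> ?b i = k \<longrightarrow> ?b j = q \<longrightarrow> E k $ i $ j + E q $ i $ j = 0"
        proof (intro ballI impI)
          fix k q assume k: "k \<in> {1..d}" and q: "q \<in> {1..d}" and kq: "k \<noteq> q" and bi: "?b i = k" and bj: "?b j = q"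
          have "(E k ** (?J q + mat 1) + (?J k + mat 1) ** E q) $ i $ j = 0"
            using tp(3) k q kq by (simp add: E_def)
          then have "E k $ i $ j * (if ?b j = q then 1 else -1) + E k $ i $ j + ((if ?b i = k then 1 else -1) * E q $ i $ j + E q $ i $ j) = 0"
            by (simp add: matrix_add_ldistrib mm_rdistrib J_right J_left)
          then show "E k $ i $ j + E q $ i $ j = 0" using bi bj by simp
        qed
      qed
    qed
    finally show ?thesis .
  qed
  have uniq: "p = P" if p: "p \<in> S" "\<forall>u\<in>S. tup_inner d (y - p) u = 0" for p
  proof -
    have w: "tup_inner d (P - p) w = 0" if "w \<in> S" for w
    proof -
      have "P - p = (y - p) - (y - P)" by (simp add: fun_diff_def)
      then have "tup_inner d (P - p) w = tup_inner d (y - p) w - tup_inner d (y - P) w"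
        by (simp add: tup_inner_diff_left)
      then show ?thesis using p(2) perp that by simp
    qed
    have "tup_inner d (P - p) (P - p) = 0"
      using w[OF PS] w[OF p(1)] by (simp add: tup_inner_diff_right)
    then have "(\<Sum>k\<in>{1..d}. inner ((P - p) k) ((P - p) k)) = 0" by (simp add: tup_inner_def)
    then have "\<forall>k\<in>{1..d}. inner ((P - p) k) ((P - p) k) = 0"
      by (subst (asm) sum_nonneg_eq_0_iff) auto
    then have in_r: "P k = p k" if "k \<in> {1..d}" for k using that by simp
    have out_r: "P k = p k" if "k \<notin> {1..d}" for k
      using that tangent_props(1)[OF orthV p(1)[unfolded S_def]] by (auto simp: P_def conj_tuple_def)
    show ?thesis
    proof
      fix k show "p k = P k" using in_r[of k] out_r[of k] by (cases "k \<in> {1..d}") auto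
    qed
  qed
  have "orth_proj d S y = P"
    unfolding orth_proj_def
  proof (rule the_equality)
    show "P \<in> S \<and> (\<forall>u\<in>S. tup_inner d (y - P) u = 0)" using PS perp by blast
    show "\<And>p. p \<in> S \<and> (\<forall>u\<in>S. tup_inner d (y - p) u = 0) \<Longrightarrow> p = P" using uniq by blast
  qed
  then show "orth_proj d (tangent_space (flag d ns ix) (conj_tuple d (V t) (Jmat d ns ix)))
              (conj_tuple d (V t) (\<lambda>k. Lam t ** Jmat d ns ix k ** X t + X t ** Jmat d ns ix k ** Lam t))
           = conj_tuple d (V t) (Zmat d ns ix (Lam t) (X t))"
    by (simp add: S_def y_def P_def V0_def L_def Xt_def)
qed


end
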